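(* Let $V\subset\mathbb{R}^n$ be starlike with respect to the origin, let $a\in V$, let $k\in\mathbb{N}$, let $P_k$ be a homogeneous polynomial of degree $k$ on $\mathbb{R}^n$, and let $L\ge0$. If $|P_k(v)|\le L$ for all $v\in a+V$, then $|P_k(v)|\le L$ for all $v\in\frac{1}{2e}V$.
   Context: $V$ starlike with respect to the origin means $sv\in V$ for all $v\in V$ and $s\in[0,1]$. $a+V=\{a+v: v\in V\}$ and $\lambda V=\{\lambda v: v\in V\}$. *)

theory Defs
  imports "HOL-Analysis.Analysis"
begin

definition starlike_origin :: "'a::real_vector set \<Rightarrow> bool" where
  "starlike_origin V \<longleftrightarrow> (\<forall>v\<in>V. \<forall>s::real. 0 \<le> s \<and> s \<le> 1 \<longrightarrow> s *\<^sub>R v \<in> V)"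

definition homogeneous_poly :: "nat \<Rightarrow> (real^'n \<Rightarrow> real) \<Rightarrow> bool" where
  "homogeneous_poly k P \<longleftrightarrow>
     (\<exists>c :: ('n \<Rightarrow> nat) \<Rightarrow> real.
        \<forall>x. P x = (\<Sum>\<alpha>\<in>{\<alpha>. (\<Sum>i\<in>UNIV. \<alpha> i) = k}. c \<alpha> * (\<Prod>i\<in>UNIV. (x $ i) ^ \<alpha> i)))"

end

theory Submission imports Defs "HOL-Computational_Algebra.Polynomial" begin



lemma coeff_mult_le:
  fixes p q :: "'a::comm_semiring_1 poly"
  assumes "degree p \<le> m" "degree q \<le> n"
  shows "coeff (p*q) (m+n) = coeff p m * coeff q n"
proof -
  have "coeff (p*q) (m+n) = (\<Sum>i\<le>m+n. coeff p i * coeff q (m+n-i))" by (rule coeff_mult)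
  also have "\<dots> = (\<Sum>i\<le>m+n. if i = m then coeff p m * coeff q n else 0)"
  proof (rule sum.cong)
    fix i assume "i \<in> {..m+n}"
    show "coeff p i * coeff q (m+n-i) = (if i = m then coeff p m * coeff q n else 0)"
    proof (cases "i = m")
      case False
      then consider "i > m" | "i < m" by linarith
      then show ?thesis
      proof cases
        case 1 then show ?thesis using assms False by (simp add: coeff_eq_0)
      next
        case 2 then have "m+n-i > n" by linarith
        then show ?thesis using assms False by (simp add: coeff_eq_0)
      qed
    qed simp
  qed simp
  also have "\<dots> = coeff p m * coeff q n" by simp
  finally show ?thesis .
qed

lemma coeff_prod_le:
  fixes f :: "'b \<Rightarrow> 'a::comm_semiring_1 poly"
  assumes "finite I" "\<And>i. i \<in> I \<Longrightarrow> degree (f i) \<le> d i"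
  shows "coeff (prod f I) (sum d I) = (\<Prod>i\<in>I. coeff (f i) (d i))"
  using assms
proof (induction I rule: finite_induct)
  case empty then show ?case by simp
next
  case (insert x F)
  have dF: "degree (prod f F) \<le> sum d F"
  proof -
    have "degree (prod f F) \<le> sum (degree \<circ> f) F" by (rule degree_prod_sum_le[OF insert(1)])
    also have "\<dots> \<le> sum d F" using insert by (auto intro: sum_mono)
    finally show ?thesis .
  qed
  have "coeff (prod f (insert x F)) (sum d (insert x F)) = coeff (f x * prod f F) (d x + sum d F)"
    using insert by simp
  also have "\<dots> = coeff (f x) (d x) * coeff (prod f F) (sum d F)"
    by (rule coeff_mult_le) (use insert dF in auto)
  also have "\<dots> = (\<Prod>i\<in>insert x F. coeff (f i) (d i))" using insert by simp
  finally show ?case .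
qed

lemma coeff_power_le:
  fixes p :: "'a::comm_semiring_1 poly"
  assumes "degree p \<le> 1"
  shows "coeff (p ^ n) n = coeff p 1 ^ n"
proof (induction n)
  case 0 then show ?case by simp
next
  case (Suc n)
  have "degree p * n \<le> 1 * n" by (rule mult_le_mono1[OF assms])
  then have "degree (p ^ n) \<le> n" using degree_power_le[of p n] by linarith
  have "coeff (p ^ Suc n) (1 + n) = coeff p 1 * coeff (p^n) n"
    by (simp only: power_Suc, rule coeff_mult_le) (use assms \<open>degree (p ^ n) \<le> n\<close> in auto)
  then show ?case using Suc by simp
qed

lemma S_ident:
  "m \<le> k \<Longrightarrow> (\<Sum>j\<le>k. (-1::real)^(k-j) * real (k choose j) * real j ^ m) = (if m = k then fact k else 0)"
proof (induction k arbitrary: m)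
  case 0 then show ?case by simp
next
  case (Suc k)
  show ?case
  proof (cases m)
    case 0
    have e: "(-1::real)^(Suc k - j) = (-1)^(Suc k) * (-1)^j" if "j \<le> Suc k" for j
    proof -
      have "(-1::real)^(Suc k) = (-1)^(Suc k - j) * (-1)^j"
        by (metis power_add le_add_diff_inverse2 that)
      then have "(-1::real)^(Suc k) * (-1)^j = (-1)^(Suc k - j) * ((-1)^j * (-1)^j)"
        by (simp add: mult.assoc)
      also have "(-1::real)^j * (-1)^j = 1" by (simp add: power_mult_distrib[symmetric])
      finally show ?thesis by simp
    qed
    have "(\<Sum>j\<le>Suc k. (-1::real)^(Suc k-j) * real (Suc k choose j) * real j ^ m)
        = (-1)^(Suc k) * (\<Sum>j\<le>Suc k. (-1)^j * real (Suc k choose j))"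
    proof -
      have "(\<Sum>j\<le>Suc k. (-1::real)^(Suc k-j) * real (Suc k choose j) * real j ^ m)
        = (\<Sum>j\<le>Suc k. (-1)^(Suc k) * ((-1)^j * real (Suc k choose j)))"
        using 0 by (intro sum.cong) (simp_all add: e del: power_Suc)
      then show ?thesis by (simp only: sum_distrib_left)
    qed
    also have "\<dots> = 0" using choose_alternating_sum[of "Suc k", where 'a=real] by simp
    finally show ?thesis using 0 by simp
  next
    case (Suc m')
    have m': "m' \<le> k" using Suc \<open>m \<le> Suc k\<close> by simp
    have "(\<Sum>j\<le>Suc k. (-1::real)^(Suc k-j) * real (Suc k choose j) * real j ^ m)
       = (\<Sum>i\<le>k. (-1::real)^(Suc k - Suc i) * real (Suc k choose Suc i) * real (Suc i) ^ Suc m')"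
      by (simp add: sum.atMost_Suc_shift Suc del: binomial_Suc_Suc sum.atMost_Suc)
    also have "\<dots> = (\<Sum>i\<le>k. real (Suc k) * ((-1::real)^(k - i) * real (k choose i) * real (Suc i) ^ m'))"
    proof (rule sum.cong)
      fix i assume "i \<in> {..k}"
      have that': "real (Suc k choose Suc i) * real (Suc i) = real (Suc k) * real (k choose i)"
        using Suc_times_binomial_eq[of k i] by (metis of_nat_mult)
      then show "(-1::real)^(Suc k - Suc i) * real (Suc k choose Suc i) * real (Suc i) ^ Suc m'
         = real (Suc k) * ((-1::real)^(k - i) * real (k choose i) * real (Suc i) ^ m')"
      proof -
        have "(-1::real)^(Suc k - Suc i) * real (Suc k choose Suc i) * real (Suc i) ^ Suc m'
          = (-1::real)^(k - i) * (real (Suc k choose Suc i) * real (Suc i)) * real (Suc i) ^ m'"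
          by (simp only: diff_Suc_Suc power_Suc mult.assoc mult.left_commute)
        also have "\<dots> = real (Suc k) * ((-1::real)^(k - i) * real (k choose i) * real (Suc i) ^ m')"
          using that' by (simp only: mult.assoc mult.left_commute)
        finally show ?thesis .
      qed
    qed simp
    also have "\<dots> = real (Suc k) * (\<Sum>i\<le>k. (-1::real)^(k - i) * real (k choose i) * (\<Sum>l\<le>m'. real (m' choose l) * real i ^ l))"
    proof -
      have "real (Suc i) ^ m' = (\<Sum>l\<le>m'. real (m' choose l) * real i ^ l)" for i
        using binomial_ring[of "real i" 1 m'] by (simp add: add.commute)
      then show ?thesis by (simp add: sum_distrib_left)
    qed
    also have "\<dots> = real (Suc k) * (\<Sum>l\<le>m'. real (m' choose l) * (\<Sum>i\<le>k. (-1::real)^(k - i) * real (k choose i) * real i ^ l))"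
      by (simp add: sum_distrib_left sum.swap[of _ "{..k}"] algebra_simps)
    also have "\<dots> = real (Suc k) * (\<Sum>l\<le>m'. real (m' choose l) * (if l = k then fact k else 0))"
      using Suc.IH m' by (intro arg_cong[where f="\<lambda>x. _ * x"] sum.cong) auto
    also have "\<dots> = (if m = Suc k then fact (Suc k) else 0)"
    proof (cases "m' = k")
      case True
      then show ?thesis using Suc by (simp add: sum.delta' if_distrib cong: if_cong)
    next
      case False
      then have "(\<Sum>l\<le>m'. real (m' choose l) * (if l = k then fact k else 0)) = 0"
        using m' by (intro sum.neutral) auto
      then show ?thesis using Suc False by simp
    qed
    finally show ?thesis .
  qed
qed


lemma exp_ge_term:
  fixes x :: real
  assumes "0 \<le> x"
  shows "x^n / fact n \<le> exp x"
proof -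
  have s: "(\<lambda>m. x^m / fact m) sums exp x"
    using exp_converges[of x] by (simp add: divide_inverse_commute)
  have "sum (\<lambda>m. x^m / fact m) {n} \<le> suminf (\<lambda>m. x^m / fact m)"
    by (rule sum_le_suminf) (use s assms in \<open>auto simp: sums_summable\<close>)
  moreover have "suminf (\<lambda>m. x^m / fact m) = exp x" using s by (rule sums_unique[symmetric])
  ultimately show ?thesis by simp
qed

lemma fin_diff:
  fixes q :: "real poly"
  assumes "degree q \<le> k"
  shows "(\<Sum>j\<le>k. (-1)^(k-j) * real (k choose j) * poly q (real j * h)) = fact k * h^k * coeff q k"
proof -
  have pq: "poly q x = (\<Sum>m\<le>k. coeff q m * x^m)" for x
  proof -
    have "poly q x = (\<Sum>m\<le>degree q. coeff q m * x^m)" by (rule poly_altdef)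
    also have "\<dots> = (\<Sum>m\<le>k. coeff q m * x^m)"
      by (rule sum.mono_neutral_left) (use assms in \<open>auto simp: coeff_eq_0\<close>)
    finally show ?thesis .
  qed
  have "(\<Sum>j\<le>k. (-1)^(k-j) * real (k choose j) * poly q (real j * h))
      = (\<Sum>m\<le>k. coeff q m * h^m * (\<Sum>j\<le>k. (-1)^(k-j) * real (k choose j) * real j ^ m))"
  proof -
    have "(\<Sum>j\<le>k. (-1)^(k-j) * real (k choose j) * poly q (real j * h))
      = (\<Sum>j\<le>k. \<Sum>m\<le>k. (-1)^(k-j) * real (k choose j) * (coeff q m * (real j * h)^m))"
      by (simp only: pq sum_distrib_left)
    also have "\<dots> = (\<Sum>m\<le>k. \<Sum>j\<le>k. (-1)^(k-j) * real (k choose j) * (coeff q m * (real j * h)^m))"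
      by (rule sum.swap)
    also have "\<dots> = (\<Sum>m\<le>k. coeff q m * h^m * (\<Sum>j\<le>k. (-1)^(k-j) * real (k choose j) * real j ^ m))"
      by (intro sum.cong refl) (simp add: sum_distrib_left power_mult_distrib mult_ac)
    finally show ?thesis .
  qed
  also have "\<dots> = (\<Sum>m\<le>k. if m = k then coeff q k * h^k * fact k else 0)"
    by (intro sum.cong refl) (simp add: S_ident)
  also have "\<dots> = fact k * h^k * coeff q k" by simp
  finally show ?thesis .
qed

theorem lemma3p5:
  fixes V :: "(real^'n) set" and a :: "real^'n" and k :: nat
    and P :: "real^'n \<Rightarrow> real" and L :: real
  assumes "starlike_origin V"
    and "a \<in> V"
    and "homogeneous_poly k P"
    and "L \<ge> 0"
    and "\<forall>v \<in> (\<lambda>w. a + w) ` V. \<bar>P v\<bar> \<le> L"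
  shows "\<forall>v \<in> (\<lambda>w. (1 / (2 * exp 1)) *\<^sub>R w) ` V. \<bar>P v\<bar> \<le> L"
proof
  obtain c where hc0: "\<forall>x. P x = (\<Sum>\<alpha>\<in>{\<alpha>. (\<Sum>i\<in>UNIV. \<alpha> i) = k}. c \<alpha> * (\<Prod>i\<in>UNIV. (x $ i) ^ \<alpha> i))"
    using assms(3) unfolding homogeneous_poly_def by blast
  define A where "A = {\<alpha>::'n\<Rightarrow>nat. (\<Sum>i\<in>UNIV. \<alpha> i) = k}"
  have hc: "P x = (\<Sum>\<alpha>\<in>A. c \<alpha> * (\<Prod>i\<in>UNIV. (x $ i) ^ \<alpha> i))" for x
    using hc0 unfolding A_def by blast
  have hom: "P (s *\<^sub>R x) = s^k * P x" for s x
  proof -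
    have "c \<alpha> * (\<Prod>i\<in>UNIV. ((s *\<^sub>R x) $ i) ^ \<alpha> i) = s^k * (c \<alpha> * (\<Prod>i\<in>UNIV. (x $ i) ^ \<alpha> i))"
      if "\<alpha> \<in> A" for \<alpha>
    proof -
      have "(\<Prod>i\<in>UNIV. ((s *\<^sub>R x) $ i) ^ \<alpha> i) = (\<Prod>i\<in>UNIV. s ^ \<alpha> i) * (\<Prod>i\<in>UNIV. (x $ i) ^ \<alpha> i)"
        by (simp add: power_mult_distrib prod.distrib)
      also have "(\<Prod>i\<in>UNIV. s ^ \<alpha> i) = s ^ k" using that by (simp add: A_def power_sum[symmetric])
      finally show ?thesis by simp
    qed
    then have "P (s *\<^sub>R x) = (\<Sum>\<alpha>\<in>A. s^k * (c \<alpha> * (\<Prod>i\<in>UNIV. (x $ i) ^ \<alpha> i)))"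
      unfolding hc by (intro sum.cong) auto
    then show ?thesis by (simp add: hc sum_distrib_left)
  qed
  fix u assume "u \<in> (\<lambda>w. (1 / (2 * exp 1)) *\<^sub>R w) ` V"
  then obtain v where v: "v \<in> V" and u: "u = (1 / (2 * exp 1)) *\<^sub>R v" by blast
  define M where "M \<alpha> = (\<Prod>i\<in>UNIV. [:a$i, v$i:] ^ \<alpha> i)" for \<alpha>
  define Q where "Q = (\<Sum>\<alpha>\<in>A. smult (c \<alpha>) (M \<alpha>))"
  have polyQ: "poly Q t = P (a + t *\<^sub>R v)" for t
    by (simp add: Q_def M_def poly_sum poly_prod hc algebra_simps)
  have dlin: "degree ([:a$i, v$i:] ^ n) \<le> n" for i n
  proof -
    have "degree ([:a$i, v$i:] ^ n) \<le> degree [:a$i, v$i:] * n" by (rule degree_power_le)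
    also have "\<dots> \<le> 1 * n" by (intro mult_le_mono1) simp
    finally show ?thesis by simp
  qed
  have degM: "degree (M \<alpha>) \<le> sum \<alpha> UNIV" for \<alpha>
  proof -
    have "degree (M \<alpha>) \<le> sum (degree \<circ> (\<lambda>i. [:a$i, v$i:] ^ \<alpha> i)) UNIV"
      unfolding M_def by (rule degree_prod_sum_le) simp
    also have "\<dots> \<le> sum \<alpha> UNIV" by (intro sum_mono) (simp add: dlin)
    finally show ?thesis .
  qed
  have coeffM: "coeff (M \<alpha>) (sum \<alpha> UNIV) = (\<Prod>i\<in>UNIV. (v$i)^\<alpha> i)" for \<alpha>
  proof -
    have "coeff (M \<alpha>) (sum \<alpha> UNIV) = (\<Prod>i\<in>UNIV. coeff ([:a$i, v$i:] ^ \<alpha> i) (\<alpha> i))"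
      unfolding M_def by (rule coeff_prod_le) (simp_all add: dlin)
    also have "\<dots> = (\<Prod>i\<in>UNIV. (v$i)^\<alpha> i)"
      by (intro prod.cong refl) (subst coeff_power_le, simp_all)
    finally show ?thesis .
  qed
  have degQ: "degree Q \<le> k"
  proof (cases "finite A")
    case True
    show ?thesis unfolding Q_def
    proof (rule degree_sum_le[OF True])
      fix \<alpha> assume "\<alpha> \<in> A"
      then have "degree (M \<alpha>) \<le> k" using degM[of \<alpha>] by (simp add: A_def)
      then show "degree (smult (c \<alpha>) (M \<alpha>)) \<le> k" using degree_smult_le order.trans by blast
    qed
  next
    case False then show ?thesis by (simp add: Q_def)
  qed
  have coeffQ: "coeff Q k = P v"
  proof -
    have "coeff Q k = (\<Sum>\<alpha>\<in>A. c \<alpha> * coeff (M \<alpha>) k)" by (simp add: Q_def coeff_sum)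
    also have "\<dots> = (\<Sum>\<alpha>\<in>A. c \<alpha> * (\<Prod>i\<in>UNIV. (v$i)^\<alpha> i))"
      apply (intro sum.cong refl)
      subgoal for \<alpha> using coeffM[of \<alpha>] by (simp add: A_def)
      done
    also have "\<dots> = P v" by (simp add: hc)
    finally show ?thesis .
  qed
  define h where "h = 1 / real k"
  have pts: "\<bar>poly Q (real j * h)\<bar> \<le> L" if "j \<le> k" for j
  proof -
    have h0: "0 \<le> real j * h" by (simp add: h_def)
    have h1: "real j * h \<le> 1"
    proof (cases "k = 0")
      case True then show ?thesis by (simp add: h_def)
    next
      case False then show ?thesis using that by (simp add: h_def field_simps)
    qed
    have "(real j * h) *\<^sub>R v \<in> V" using assms(1) v h0 h1 unfolding starlike_origin_def by blast
    then have "\<bar>P (a + (real j * h) *\<^sub>R v)\<bar> \<le> L" using assms(5) by blast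
    then show ?thesis using polyQ by simp
  qed
  have fd: "(\<Sum>j\<le>k. (-1)^(k-j) * real (k choose j) * poly Q (real j * h)) = fact k * h^k * P v"
    using fin_diff[OF degQ, of h] coeffQ by simp
  have "\<bar>fact k * h^k * P v\<bar> \<le> (\<Sum>j\<le>k. \<bar>(-1)^(k-j) * real (k choose j) * poly Q (real j * h)\<bar>)"
    unfolding fd[symmetric] by (rule sum_abs)
  also have "\<dots> \<le> (\<Sum>j\<le>k. real (k choose j) * L)"
    by (intro sum_mono) (simp add: abs_mult pts mult_left_mono)
  also have "\<dots> = 2^k * L"
  proof -
    have "(\<Sum>j\<le>k. real (k choose j)) = 2^k"
      unfolding of_nat_sum[symmetric] choose_row_sum by simp
    then show ?thesis by (simp add: sum_distrib_right[symmetric])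
  qed
  finally have b1: "fact k * h^k * \<bar>P v\<bar> \<le> 2^k * L" by (simp add: abs_mult h_def)
  have hk: "h^k * real k ^ k = 1"
  proof (cases "k = 0")
    case True then show ?thesis by simp
  next
    case False then show ?thesis by (simp add: h_def power_mult_distrib[symmetric])
  qed
  have b2: "fact k * \<bar>P v\<bar> \<le> 2^k * L * real k ^ k"
  proof -
    have "fact k * h^k * \<bar>P v\<bar> * real k ^ k \<le> 2^k * L * real k ^ k"
      using b1 by (intro mult_right_mono) auto
    then show ?thesis using hk by (simp add: algebra_simps)
  qed
  have ek: "real k ^ k \<le> exp (real k) * fact k"
    using exp_ge_term[of "real k" k] by (simp add: divide_simps)
  have "fact k * \<bar>P v\<bar> \<le> fact k * (2^k * exp 1 ^ k * L)"
  proof -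
    have "2^k * L * real k ^ k \<le> 2^k * L * (exp (real k) * fact k)"
      using ek assms(4) by (intro mult_left_mono) auto
    also have "exp (real k) = exp 1 ^ k" by (simp add: exp_of_nat_mult[symmetric])
    finally have c: "2^k * L * real k ^ k \<le> 2^k * L * (exp 1 ^ k * fact k)" .
    have eq: "fact k * (2^k * exp 1 ^ k * L) = 2^k * L * (exp 1 ^ k * fact k)" by (simp only: mult_ac)
    show ?thesis using b2 c eq by linarith
  qed
  then have b3: "\<bar>P v\<bar> \<le> (2 * exp 1)^k * L" by (simp add: power_mult_distrib mult_ac)
  have "\<bar>P u\<bar> = \<bar>P v\<bar> / (2 * exp 1)^k" by (simp add: u hom abs_mult power_divide)
  also have "\<dots> \<le> L" using b3 by (subst pos_divide_le_eq) (auto simp: mult.commute)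
  finally show "\<bar>P u\<bar> \<le> L" .
qed

end
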